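(* Let $N\in\mathbb{N}$, $N\geqslant 2$, let $v:[0,1]\to\mathbb{R}$ be continuous and let $f:[0,1]\times\mathbb{R}\to\mathbb{R}$ satisfy: (C(c)) $f$ is continuous on $[0,1]\times\mathbb{R}$ and has a continuous partial derivative $f_x$ with respect to the second variable on $[0,1]\times\mathbb{R}$; (D(f)) there exist positive constants $A,B$ with $A<1$ such that $|f(t,x)|\leqslant A|x|+B$ for all $t\in[0,1]$, $x\in\mathbb{R}$; (D($f_x$)) $\inf_{(t,x)\in[0,1]\times\mathbb{R}} f_x(t,x)>-1$. Then the discrete problem $$\Delta^2x(k-1)=\tfrac{1}{N^2}f\left(\tfrac{k}{N},x(k)\right)+\tfrac{1}{N^2}v\left(\tfrac{k}{N}\right),\ k\in\{1,\dots,N-1\},\qquad x(0)=x(N)=0,$$ has a unique solution $x:\{0,1,\dots,N\}\to\mathbb{R}$.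
   Context: $\Delta x(k-1)=x(k)-x(k-1)$, so $\Delta^2x(k-1)=x(k+1)-2x(k)+x(k-1)$. *)

theory Defs
  imports "HOL-Analysis.Analysis"
begin

text \<open>Second difference: Delta^2 x(k-1) = x(k+1) - 2 x(k) + x(k-1).\<close>
definition second_diff :: "(nat \<Rightarrow> real) \<Rightarrow> nat \<Rightarrow> real" where
  "second_diff x k = x (k + 1) - 2 * x k + x (k - 1)"

text \<open>x (a function on {0..N}, represented as nat => real, only values on {0..N} matter)
  solves the discrete Dirichlet problem.\<close>
definition discrete_solution ::
  "nat \<Rightarrow> (real \<Rightarrow> real \<Rightarrow> real) \<Rightarrow> (real \<Rightarrow> real) \<Rightarrow> (nat \<Rightarrow> real) \<Rightarrow> bool" where
  "discrete_solution N f v x \<longleftrightarrow>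
     (\<forall>k\<in>{1..N-1}. second_diff x k =
        (1 / (real N)^2) * f (real k / real N) (x k) + (1 / (real N)^2) * v (real k / real N))
     \<and> x 0 = 0 \<and> x N = 0"

end

theory Submission
  imports Defs
begin

lemma sbp:
  fixes d :: "nat \<Rightarrow> real"
  shows "(\<Sum>k\<in>{1..n}. d k * (d (k+1) - 2 * d k + d (k-1)))
     = d n * (d (n+1) - d n) - d 0 * (d 1 - d 0) - (\<Sum>k<n. (d (k+1) - d k)^2)"
proof (induction n)
  case 0
  then show ?case by simp
next
  case (Suc n)
  have "(\<Sum>k\<in>{1..Suc n}. d k * (d (k+1) - 2 * d k + d (k-1)))
      = (\<Sum>k\<in>{1..n}. d k * (d (k+1) - 2 * d k + d (k-1))) + d (Suc n) * (d (Suc n+1) - 2 * d (Suc n) + d n)"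
    by (simp add: sum.cl_ivl_Suc)
  also have "\<dots> = d (Suc n) * (d (Suc n+1) - d (Suc n)) - d 0 * (d 1 - d 0) - (\<Sum>k<Suc n. (d (k+1) - d k)^2)"
    using Suc by (simp add: power2_eq_square algebra_simps)
  finally show ?case .
qed

lemma cs_sum:
  fixes a :: "nat \<Rightarrow> real"
  shows "(\<Sum>j<k. a j)^2 \<le> real k * (\<Sum>j<k. (a j)^2)"
proof (induction k)
  case 0
  then show ?case by simp
next
  case (Suc k)
  define s where "s = (\<Sum>j<k. a j)"
  define Q where "Q = (\<Sum>j<k. (a j)^2)"
  have IH: "s^2 \<le> real k * Q" using Suc by (simp add: s_def Q_def)
  have Q0: "Q \<ge> 0" unfolding Q_def by (simp add: sum_nonneg)
  have key: "2 * s * a k \<le> Q + real k * (a k)^2"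
  proof (cases "k = 0")
    case True
    then show ?thesis by (simp add: s_def Q_def)
  next
    case False
    hence kp: "real k > 0" by simp
    have "0 \<le> (s - real k * a k)^2" by simp
    hence "2 * s * a k * real k \<le> s^2 + (real k)^2 * (a k)^2"
      by (simp add: power2_eq_square algebra_simps)
    also have "\<dots> \<le> real k * Q + (real k)^2 * (a k)^2" using IH by simp
    finally have "real k * (2 * s * a k) \<le> real k * (Q + real k * (a k)^2)"
      by (simp add: power2_eq_square algebra_simps)
    thus ?thesis using kp by simp
  qed
  have "(\<Sum>j<Suc k. a j)^2 = (s + a k)^2" by (simp add: s_def)
  also have "\<dots> = s^2 + 2 * s * a k + (a k)^2" by (simp add: power2_eq_square algebra_simps)
  also have "\<dots> \<le> real k * Q + (Q + real k * (a k)^2) + (a k)^2" using IH key by linarith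
  also have "\<dots> = real (Suc k) * (\<Sum>j<Suc k. (a j)^2)" by (simp add: Q_def algebra_simps)
  finally show ?case .
qed

lemma mvt_mono:
  fixes g g' :: "real \<Rightarrow> real"
  assumes der: "\<And>x. (g has_real_derivative g' x) (at x)"
    and lb: "\<And>x. g' x \<ge> m"
  shows "(g b - g a) * (b - a) \<ge> m * (b - a)^2"
proof -
  have gen: "(g q - g p) * (q - p) \<ge> m * (q - p)^2" if pq: "p < q" for p q
  proof -
    obtain z where "g q - g p = (q - p) * g' z"
      using MVT2[OF pq, of g g'] der by blast
    hence "(g q - g p) * (q - p) = g' z * (q - p)^2" by (simp add: power2_eq_square)
    moreover have "g' z * (q - p)^2 \<ge> m * (q - p)^2" using lb[of z]
      by (simp add: mult_right_mono)
    ultimately show ?thesis by simp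
  qed
  consider "a < b" | "a = b" | "b < a" by linarith
  then show ?thesis
  proof cases
    case 1 then show ?thesis using gen by blast
  next
    case 2 then show ?thesis by simp
  next
    case 3
    have "(g a - g b) * (a - b) \<ge> m * (a - b)^2" using gen[OF 3] .
    moreover have "(g a - g b) * (a - b) = (g b - g a) * (b - a)" by (simp add: algebra_simps)
    moreover have "(a - b)^2 = (b - a)^2" by (simp add: power2_commute)
    ultimately show ?thesis by simp
  qed
qed

fun PP :: "(nat \<Rightarrow> real \<Rightarrow> real) \<Rightarrow> real \<Rightarrow> nat \<Rightarrow> real \<times> real" where
  "PP h s 0 = (0, s)"
| "PP h s (Suc k) = (snd (PP h s k), 2 * snd (PP h s k) - fst (PP h s k) + h (Suc k) (snd (PP h s k)))"

definition traj :: "(nat \<Rightarrow> real \<Rightarrow> real) \<Rightarrow> real \<Rightarrow> nat \<Rightarrow> real" where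
  "traj h s k = fst (PP h s k)"

lemma snd_PP: "snd (PP h s k) = traj h s (Suc k)"
  by (simp add: traj_def)

lemma traj0: "traj h s 0 = 0" and traj1: "traj h s 1 = s"
  by (simp_all add: traj_def)

lemma traj_SS: "traj h s (Suc (Suc k)) = 2 * traj h s (Suc k) - traj h s k + h (Suc k) (traj h s (Suc k))"
  by (simp add: traj_def)

lemma traj_cont:
  assumes "\<And>j. continuous_on UNIV (h j)"
  shows "continuous_on UNIV (\<lambda>s. fst (PP h s k)) \<and> continuous_on UNIV (\<lambda>s. snd (PP h s k))"
proof (induction k)
  case 0
  then show ?case by (simp add: continuous_on_id continuous_on_const)
next
  case (Suc k)
  hence c1: "continuous_on UNIV (\<lambda>s. fst (PP h s k))" and c2: "continuous_on UNIV (\<lambda>s. snd (PP h s k))" by auto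
  have c3: "continuous_on UNIV (\<lambda>s. h (Suc k) (snd (PP h s k)))"
    using continuous_on_compose2[OF assms[of "Suc k"] c2] by simp
  show ?case using c1 c2 c3 by (auto intro!: continuous_intros)
qed


lemma traj_bound:
  fixes h :: "nat \<Rightarrow> real \<Rightarrow> real"
  assumes hb: "\<And>j. 1 \<le> j \<Longrightarrow> j < N \<Longrightarrow> \<bar>h j (traj h s j)\<bar> \<le> H" and H0: "H \<ge> 0"
  shows "k \<le> N \<longrightarrow> 2 * \<bar>traj h s k - real k * s\<bar> \<le> real k * (real k - 1) * H
     \<and> (k < N \<longrightarrow> \<bar>traj h s (Suc k) - traj h s k - s\<bar> \<le> real k * H)"
proof (induction k)
  case 0
  then show ?case by (simp add: traj0 traj1[simplified])
next
  case (Suc k)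
  show ?case
  proof
    assume kN: "Suc k \<le> N"
    have I1: "2 * \<bar>traj h s k - real k * s\<bar> \<le> real k * (real k - 1) * H"
      and I2: "\<bar>traj h s (Suc k) - traj h s k - s\<bar> \<le> real k * H" using Suc kN by auto
    have "traj h s (Suc k) - real (Suc k) * s = (traj h s k - real k * s) + (traj h s (Suc k) - traj h s k - s)"
      by (simp add: algebra_simps)
    hence "2 * \<bar>traj h s (Suc k) - real (Suc k) * s\<bar> \<le> 2 * \<bar>traj h s k - real k * s\<bar> + 2 * \<bar>traj h s (Suc k) - traj h s k - s\<bar>"
      by (metis abs_triangle_ineq distrib_left mult_le_cancel_left_pos zero_less_numeral)
    also have "\<dots> \<le> real k * (real k - 1) * H + 2 * (real k * H)"
    proof -
      have "2 * \<bar>traj h s (Suc k) - traj h s k - s\<bar> \<le> 2 * (real k * H)" using I2 by simp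
      thus ?thesis using I1 by linarith
    qed
    also have "\<dots> = real (Suc k) * (real (Suc k) - 1) * H" by (simp add: algebra_simps)
    finally have P1: "2 * \<bar>traj h s (Suc k) - real (Suc k) * s\<bar> \<le> real (Suc k) * (real (Suc k) - 1) * H" .
    have P2: "\<bar>traj h s (Suc (Suc k)) - traj h s (Suc k) - s\<bar> \<le> real (Suc k) * H" if kN2: "Suc k < N"
    proof -
      have "traj h s (Suc (Suc k)) - traj h s (Suc k) - s = (traj h s (Suc k) - traj h s k - s) + h (Suc k) (traj h s (Suc k))"
        by (simp add: traj_SS)
      moreover have "\<bar>h (Suc k) (traj h s (Suc k))\<bar> \<le> H" using hb[of "Suc k"] kN2 by simp
      ultimately have "\<bar>traj h s (Suc (Suc k)) - traj h s (Suc k) - s\<bar> \<le> real k * H + H" using I2 by linarith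
      thus ?thesis by (simp add: algebra_simps)
    qed
    show "2 * \<bar>traj h s (Suc k) - real (Suc k) * s\<bar> \<le> real (Suc k) * (real (Suc k) - 1) * H
     \<and> (Suc k < N \<longrightarrow> \<bar>traj h s (Suc (Suc k)) - traj h s (Suc k) - s\<bar> \<le> real (Suc k) * H)"
      using P1 P2 by blast
  qed
qed

lemma alg:
  fixes A B' N K D M :: real
  assumes "0 < A" "A < 1" "B' \<ge> 0" "N \<ge> 1" "M \<le> N * K + D" "2 * D = A * M + B'"
    "K = B' / (1 - A)"
  shows "D \<le> N * K"
proof -
  have AK: "(1 - A) * K = B'" using assms by simp
  have "A * M \<le> A * (N * K + D)" using assms by (simp add: mult_left_mono)
  hence "D * (2 - A) \<le> A * N * K + B'" using assms by (simp add: algebra_simps)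
  also have "\<dots> \<le> A * N * K + N * B'" using assms mult_right_mono[of 1 N B'] by simp
  also have "\<dots> \<le> A * N * K + 2 * N * B'" using assms by simp
  also have "\<dots> = A * N * K + 2 * N * ((1 - A) * K)" using AK by simp
  also have "\<dots> = N * K * (2 - A)" by (simp add: algebra_simps)
  finally have "D * (2 - A) \<le> (N * K) * (2 - A)" .
  moreover have "2 - A > 0" using assms by simp
  ultimately show ?thesis using mult_le_cancel_right_pos by blast
qed


lemma uniq:
  fixes N :: nat and v :: "real \<Rightarrow> real" and f :: "real \<Rightarrow> real \<Rightarrow> real"
    and fx :: "real \<Rightarrow> real \<Rightarrow> real"
  assumes N: "N \<ge> 2"
    and fx_deriv: "\<And>t x. t \<in> {0..1} \<Longrightarrow> (f t has_real_derivative fx t x) (at x)"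
    and fx_bdd: "bdd_below ((\<lambda>(t, x). fx t x) ` ({0..1} \<times> UNIV))"
    and fx_inf: "(INF (t, x)\<in>{0..1} \<times> UNIV. fx t x) > -1"
    and xs: "discrete_solution N f v x" and ys: "discrete_solution N f v y"
  shows "\<forall>k\<le>N. y k = x k"
proof -
  define m where "m = (INF (t, x)\<in>{0..1} \<times> UNIV. fx t x)"
  define c where "c = max 0 (- m)"
  have c0: "c \<ge> 0" and c1: "c < 1" and mc: "m \<ge> - c" using fx_inf by (auto simp: c_def m_def)
  have fxm: "fx t z \<ge> m" if "t \<in> {0..1}" for t z
  proof -
    have "m \<le> (\<lambda>(t, x). fx t x) (t, z)" unfolding m_def
      by (rule cINF_lower[OF fx_bdd]) (use that in auto)
    thus ?thesis by simp
  qed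
  define d where "d = (\<lambda>k. y k - x k)"
  have Npos: "real N > 0" using N by simp
  have d0: "d 0 = 0" and dN: "d N = 0" using xs ys by (auto simp: d_def discrete_solution_def)
  define S where "S = (\<Sum>j<N. (d (j+1) - d j)^2)"
  have S0: "S \<ge> 0" unfolding S_def by (simp add: sum_nonneg)
  have term_lb: "d k * (d (k+1) - 2 * d k + d (k-1)) \<ge> - (c / (real N)^2) * (d k)^2" if k: "k \<in> {1..N-1}" for k
  proof -
    define t where "t = real k / real N"
    have t01: "t \<in> {0..1}" using k N by (auto simp: t_def field_simps)
    have ex: "second_diff x k = (1 / (real N)^2) * f t (x k) + (1 / (real N)^2) * v t"
      using xs k by (simp add: discrete_solution_def t_def)
    have ey: "second_diff y k = (1 / (real N)^2) * f t (y k) + (1 / (real N)^2) * v t"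
      using ys k by (simp add: discrete_solution_def t_def)
    have "d (k+1) - 2 * d k + d (k-1) = second_diff y k - second_diff x k"
      by (simp add: d_def second_diff_def algebra_simps)
    also have "\<dots> = (f t (y k) - f t (x k)) / (real N)^2" using ex ey by (simp add: diff_divide_distrib)
    finally have e: "d k * (d (k+1) - 2 * d k + d (k-1)) = ((f t (y k) - f t (x k)) * (y k - x k)) / (real N)^2"
      by (simp add: d_def)
    have "(f t (y k) - f t (x k)) * (y k - x k) \<ge> m * (y k - x k)^2"
      by (rule mvt_mono[where g'="fx t"]) (use fx_deriv[OF t01] fxm[OF t01] in auto)
    moreover have "m * (y k - x k)^2 \<ge> - c * (d k)^2" using mult_right_mono[OF mc, of "(y k - x k)^2"] by (simp add: d_def)
    ultimately have "((f t (y k) - f t (x k)) * (y k - x k)) \<ge> - c * (d k)^2" by linarith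
    hence "((f t (y k) - f t (x k)) * (y k - x k)) / (real N)^2 \<ge> (- c * (d k)^2) / (real N)^2"
      by (rule divide_right_mono) simp
    thus ?thesis using e by simp
  qed
  have NS: "N = Suc (N - 1)" using N by simp
  have "(\<Sum>k\<in>{1..N-1}. d k * (d (k+1) - 2 * d k + d (k-1)))
     = d (N-1) * (d (N-1+1) - d (N-1)) - d 0 * (d 1 - d 0) - (\<Sum>k<N-1. (d (k+1) - d k)^2)"
    by (rule sbp)
  also have "\<dots> = - S"
  proof -
    have "S = (\<Sum>k<N-1. (d (k+1) - d k)^2) + (d N - d (N-1))^2"
      unfolding S_def by (subst NS, subst sum.lessThan_Suc) (metis NS Suc_eq_plus1)
    thus ?thesis using d0 dN NS by (simp add: power2_eq_square algebra_simps)
  qed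
  finally have sumS: "(\<Sum>k\<in>{1..N-1}. d k * (d (k+1) - 2 * d k + d (k-1))) = - S" .
  have "(\<Sum>k\<in>{1..N-1}. - (c / (real N)^2) * (d k)^2) \<le> (\<Sum>k\<in>{1..N-1}. d k * (d (k+1) - 2 * d k + d (k-1)))"
    by (rule sum_mono) (rule term_lb)
  hence S1: "S \<le> (c / (real N)^2) * (\<Sum>k\<in>{1..N-1}. (d k)^2)"
    using sumS by (simp add: sum_distrib_left sum_negf sum_divide_distrib)
  have dk: "(d k)^2 \<le> real N * S" if "k \<le> N" for k
  proof -
    have "d k = (\<Sum>j<k. d (Suc j) - d j)" using d0 by (simp add: sum_lessThan_telescope)
    hence "(d k)^2 \<le> real k * (\<Sum>j<k. (d (Suc j) - d j)^2)" using cs_sum by simp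
    also have "\<dots> \<le> real N * S"
    proof (rule mult_mono)
      show "(\<Sum>j<k. (d (Suc j) - d j)^2) \<le> S" unfolding S_def
        using sum_mono2[of "{..<N}" "{..<k}" "\<lambda>j. (d (Suc j) - d j)^2"] that by auto
    qed (use that S0 in \<open>auto simp: sum_nonneg\<close>)
    finally show ?thesis .
  qed
  have "(\<Sum>k\<in>{1..N-1}. (d k)^2) \<le> real (card {1..N-1}) * (real N * S)"
    by (rule sum_bounded_above) (use dk in auto)
  also have "\<dots> \<le> real N * (real N * S)"
    by (rule mult_right_mono) (use S0 in auto)
  finally have "(c / (real N)^2) * (\<Sum>k\<in>{1..N-1}. (d k)^2) \<le> (c / (real N)^2) * (real N * (real N * S))"
    by (rule mult_left_mono) (use c0 in auto)
  also have "\<dots> = c * S" using Npos by (simp add: power2_eq_square field_simps)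
  finally have "S \<le> c * S" using S1 by linarith
  hence "(1 - c) * S \<le> 0" by (simp add: algebra_simps)
  hence SZ: "S = 0" using c1 S0 by (smt (verit) mult_pos_pos)
  have zero: "d (Suc j) - d j = 0" if "j < N" for j
  proof -
    have "\<forall>j\<in>{..<N}. (d (j+1) - d j)^2 = 0"
      using SZ unfolding S_def by (subst (asm) sum_nonneg_eq_0_iff) auto
    thus ?thesis using that by simp
  qed
  have "d k = 0" if "k \<le> N" for k
  proof -
    have "d k = (\<Sum>j<k. d (Suc j) - d j)" using d0 by (simp add: sum_lessThan_telescope)
    also have "\<dots> = 0" using zero that by (intro sum.neutral) auto
    finally show ?thesis .
  qed
  thus ?thesis by (simp add: d_def)
qed


theorem theorem5:
  fixes N :: nat and v :: "real \<Rightarrow> real" and f :: "real \<Rightarrow> real \<Rightarrow> real"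
    and fx :: "real \<Rightarrow> real \<Rightarrow> real" and A B :: real
  assumes N: "N \<ge> 2"
    and v_cont: "continuous_on {0..1} v"
    and f_cont: "continuous_on ({0..1} \<times> UNIV) (\<lambda>(t, x). f t x)"
    and fx_deriv: "\<And>t x. t \<in> {0..1} \<Longrightarrow> (f t has_real_derivative fx t x) (at x)"
    and fx_cont: "continuous_on ({0..1} \<times> UNIV) (\<lambda>(t, x). fx t x)"
    and AB: "0 < A" "A < 1" "0 < B"
    and growth: "\<And>t x. t \<in> {0..1} \<Longrightarrow> \<bar>f t x\<bar> \<le> A * \<bar>x\<bar> + B"
    and fx_bdd: "bdd_below ((\<lambda>(t, x). fx t x) ` ({0..1} \<times> UNIV))"
    and fx_inf: "(INF (t, x)\<in>{0..1} \<times> UNIV. fx t x) > -1"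
  shows "\<exists>x. discrete_solution N f v x \<and>
           (\<forall>y. discrete_solution N f v y \<longrightarrow> (\<forall>k\<le>N. y k = x k))"
proof -
  define hh where "hh = (\<lambda>j x. if j \<le> N then (1 / (real N)^2) * f (real j / real N) x
      + (1 / (real N)^2) * v (real j / real N) else 0)"
  have Npos: "real N > 0" using N by simp
  have t01: "real j / real N \<in> {0..1}" if "j \<le> N" for j
    using that Npos by (auto simp: field_simps)
  have hcont: "continuous_on UNIV (hh j)" for j
  proof (cases "j \<le> N")
    case True
    have "\<forall>x. isCont (f (real j / real N)) x"
      using fx_deriv[OF t01[OF True]] DERIV_isCont by blast
    hence "continuous_on UNIV (f (real j / real N))" by (simp add: continuous_at_imp_continuous_on)
    then show ?thesis using True Npos unfolding hh_def by (auto intro!: continuous_intros)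
  next
    case False
    then show ?thesis unfolding hh_def by (simp add: continuous_on_const)
  qed
  define phi where "phi = (\<lambda>s. traj hh s N)"
  have phicont: "continuous_on UNIV phi"
    unfolding phi_def traj_def using traj_cont[of hh N] hcont by blast
  obtain V0 where V0: "\<forall>t\<in>{0..1}. norm (v t) \<le> V0"
    using compact_imp_bounded[OF compact_continuous_image[OF v_cont compact_Icc]]
    unfolding bounded_iff by auto
  define V where "V = max V0 0"
  have V: "\<And>t. t \<in> {0..1} \<Longrightarrow> \<bar>v t\<bar> \<le> V" and V0': "V \<ge> 0"
    using V0 by (force simp: V_def le_max_iff_disj)+
  define B' where "B' = B + V"
  have B'0: "B' \<ge> 0" using AB V0' by (simp add: B'_def)
  have key: "\<exists>M D. M \<le> real N * \<bar>s\<bar> + D \<and> 2 * D = A * M + B' \<and> \<bar>phi s - real N * s\<bar> \<le> D" for s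
  proof -
    define x where "x = traj hh s"
    define M where "M = Max ((\<lambda>k. \<bar>x k\<bar>) ` {..N})"
    have Mge: "\<bar>x k\<bar> \<le> M" if "k \<le> N" for k unfolding M_def using that by (intro Max_ge) auto
    have M0: "M \<ge> 0" using Mge[of 0] by simp
    define H where "H = (A * M + B') / (real N)^2"
    have H0: "H \<ge> 0" using M0 AB B'0 by (simp add: H_def)
    have hb: "\<bar>hh j (traj hh s j)\<bar> \<le> H" if "1 \<le> j" "j < N" for j
    proof -
      define t where "t = real j / real N"
      have t: "t \<in> {0..1}" using t01[of j] that by (simp add: t_def)
      have "\<bar>f t (x j)\<bar> \<le> A * \<bar>x j\<bar> + B" using growth[OF t] .
      also have "\<dots> \<le> A * M + B" using Mge[of j] that AB by (simp add: mult_left_mono)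
      finally have "\<bar>f t (x j) + v t\<bar> \<le> A * M + B'" using V[OF t] unfolding B'_def by linarith
      hence "\<bar>f t (x j) + v t\<bar> / (real N)^2 \<le> (A * M + B') / (real N)^2"
        by (rule divide_right_mono) simp
      moreover have "hh j (traj hh s j) = (f t (x j) + v t) / (real N)^2"
        using that by (simp add: hh_def t_def x_def add_divide_distrib)
      ultimately show ?thesis by (simp add: H_def)
    qed
    have bnd: "2 * \<bar>x k - real k * s\<bar> \<le> A * M + B'" if "k \<le> N" for k
    proof -
      have "2 * \<bar>x k - real k * s\<bar> \<le> real k * (real k - 1) * H"
        using traj_bound[of N hh s H k, OF hb H0] that by (simp add: x_def)
      also have "\<dots> \<le> (real N * real N) * H"
      proof (rule mult_right_mono[OF _ H0])
        show "real k * (real k - 1) \<le> real N * real N"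
        proof (cases "k = 0")
          case False thus ?thesis using that by (intro mult_mono) auto
        qed simp
      qed
      also have "\<dots> = A * M + B'" using Npos by (simp add: H_def power2_eq_square)
      finally show ?thesis .
    qed
    define D where "D = (A * M + B') / 2"
    have "M \<le> real N * \<bar>s\<bar> + D" unfolding M_def
    proof (subst Max_le_iff, simp, simp, intro ballI)
      fix a assume "a \<in> (\<lambda>k. \<bar>x k\<bar>) ` {..N}"
      then obtain k where k: "k \<le> N" "a = \<bar>x k\<bar>" by auto
      have "\<bar>x k\<bar> \<le> \<bar>real k * s\<bar> + \<bar>x k - real k * s\<bar>" by linarith
      moreover have "\<bar>real k * s\<bar> \<le> real N * \<bar>s\<bar>" using k by (simp add: abs_mult mult_right_mono)
      ultimately show "a \<le> real N * \<bar>s\<bar> + D" 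
      proof -
        assume a1: "\<bar>x k\<bar> \<le> \<bar>real k * s\<bar> + \<bar>x k - real k * s\<bar>" and a2: "\<bar>real k * s\<bar> \<le> real N * \<bar>s\<bar>"
        define e where "e = \<bar>x k - real k * s\<bar>"
        define Q where "Q = A * M + B'"
        have "2 * e \<le> Q" using bnd[OF k(1)] by (simp add: e_def Q_def)
        moreover have "a \<le> real N * \<bar>s\<bar> + e" using a1 a2 k(2) e_def by linarith
        ultimately show ?thesis unfolding D_def Q_def[symmetric] by linarith
      qed
    qed
    moreover have "\<bar>phi s - real N * s\<bar> \<le> D" using bnd[of N] unfolding D_def phi_def x_def by (simp add: field_simps)
    moreover have "2 * D = A * M + B'" by (simp add: D_def)
    ultimately show ?thesis by blast
  qed
  define K where "K = B' / (1 - A)"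
  have K0: "K \<ge> 0" using B'0 AB by (simp add: K_def)
  have NR: "real N \<ge> 1" using N by simp
  have pK: "phi K \<ge> 0"
  proof -
    obtain M D where h: "M \<le> real N * \<bar>K\<bar> + D" "2 * D = A * M + B'" "\<bar>phi K - real N * K\<bar> \<le> D"
      using key by blast
    have "D \<le> real N * K" using alg[OF AB(1,2) B'0 NR _ h(2) K_def] h(1) K0 by simp
    thus ?thesis using h(3) by linarith
  qed
  have mK: "phi (-K) \<le> 0"
  proof -
    obtain M D where h: "M \<le> real N * \<bar>-K\<bar> + D" "2 * D = A * M + B'" "\<bar>phi (-K) - real N * (-K)\<bar> \<le> D"
      using key by blast
    have "D \<le> real N * K" using alg[OF AB(1,2) B'0 NR _ h(2) K_def] h(1) K0 by simp
    thus ?thesis using h(3) by linarith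
  qed
  obtain s where s: "phi s = 0"
    using IVT'[of phi "-K" 0 K] mK pK K0 continuous_on_subset[OF phicont] by auto
  define x where "x = traj hh s"
  have sol: "discrete_solution N f v x"
    unfolding discrete_solution_def
  proof (intro conjI ballI)
    fix k assume k: "k \<in> {1..N-1}"
    then obtain j where j: "k = Suc j" by (cases k) auto
    have "second_diff x k = hh k (x k)"
      using j by (simp add: second_diff_def x_def traj_SS)
    thus "second_diff x k = 1 / (real N)\<^sup>2 * f (real k / real N) (x k) + 1 / (real N)\<^sup>2 * v (real k / real N)"
    proof -
      have "k \<le> N" using k by auto
      thus ?thesis using \<open>second_diff x k = hh k (x k)\<close> by (simp add: hh_def)
    qed
  next
    show "x 0 = 0" by (simp add: x_def traj0)
    show "x N = 0" using s by (simp add: x_def phi_def)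
  qed
  show ?thesis
    using sol uniq[OF N fx_deriv fx_bdd fx_inf sol] by blast
qed

end
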